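(* For every $n\ge1$, the set $\mathcal Z_{n+}$ is open in $(X_d^{(c)})^n$.
   Context: Let $d\ge2$. $E_{d+1}=\mathbb R^{d+1}$, $E^{(c)}_{d+1}=\mathbb C^{d+1}$ with bilinear form $(x,y)=x^0y^0+x^dy^d-\sum_{j=1}^{d-1}x^jy^j$. $X_d=\{x\in E_{d+1}:(x,x)=1\}$, $X_d^{(c)}=\{z\in E^{(c)}_{d+1}:(z,z)=1\}$. $\exp$ is the matrix exponential; $\ell(a\wedge b)x=a(b,x)-b(a,x)$. $\mathcal C_1=\{\ell(a\wedge b):(a,a)=(b,b)=1,(a,b)=0,a^0b^d-a^db^0>0\}$. $\mathcal Z_{n+}$ is the set of $(z_1,\dots,z_n)\in(X_d^{(c)})^n$ such that $z_j=e^{\tau_1M_1}\cdots e^{\tau_jM_j}c_j$ for $j=1,\dots,n$, with $\mathrm{Im}\,\tau_j>0$, $M_j\in\mathcal C_1$, $c_j\in X_d$. *)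

theory Defs
  imports "HOL-Analysis.Analysis"
begin

text \<open>Vectors of E_{d+1} (resp. its complexification) are modelled as functions
  nat => real (resp. nat => complex) vanishing at indices > d; coordinates 0..d.
  Tuples (z_1,...,z_n) are functions nat => (nat => complex) vanishing outside {1..n}.
  The topology is the product topology on functions (which on these finitely
  supported subsets is the Euclidean topology).\<close>

definition bform :: "nat \<Rightarrow> (nat \<Rightarrow> 'a::comm_ring) \<Rightarrow> (nat \<Rightarrow> 'a) \<Rightarrow> 'a" where
  "bform d x y = x 0 * y 0 + x d * y d - (\<Sum>j\<in>{1..d-1}. x j * y j)"

definition Evec :: "nat \<Rightarrow> (nat \<Rightarrow> 'a::zero) set" where
  "Evec d = {x. \<forall>i>d. x i = 0}"

definition Xd :: "nat \<Rightarrow> (nat \<Rightarrow> real) set" where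
  "Xd d = {x \<in> Evec d. bform d x x = 1}"

definition Xdc :: "nat \<Rightarrow> (nat \<Rightarrow> complex) set" where
  "Xdc d = {z \<in> Evec d. bform d z z = 1}"

definition Xdc_pow :: "nat \<Rightarrow> nat \<Rightarrow> (nat \<Rightarrow> nat \<Rightarrow> complex) set" where
  "Xdc_pow d n = {z. (\<forall>j\<in>{1..n}. z j \<in> Xdc d) \<and> (\<forall>j. j \<notin> {1..n} \<longrightarrow> z j = (\<lambda>_. 0))}"

definition cvec :: "(nat \<Rightarrow> real) \<Rightarrow> (nat \<Rightarrow> complex)" where
  "cvec x = (\<lambda>i. complex_of_real (x i))"

definition ell :: "nat \<Rightarrow> (nat \<Rightarrow> real) \<Rightarrow> (nat \<Rightarrow> real) \<Rightarrow> (nat \<Rightarrow> complex) \<Rightarrow> (nat \<Rightarrow> complex)" where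
  "ell d a b x = (\<lambda>i. cvec a i * bform d (cvec b) x - cvec b i * bform d (cvec a) x)"

definition C1 :: "nat \<Rightarrow> ((nat \<Rightarrow> complex) \<Rightarrow> (nat \<Rightarrow> complex)) set" where
  "C1 d = {ell d a b | a b. a \<in> Evec d \<and> b \<in> Evec d \<and> bform d a a = 1 \<and> bform d b b = 1
            \<and> bform d a b = 0 \<and> a 0 * b d - a d * b 0 > 0}"

definition expop :: "((nat \<Rightarrow> complex) \<Rightarrow> (nat \<Rightarrow> complex)) \<Rightarrow> (nat \<Rightarrow> complex) \<Rightarrow> (nat \<Rightarrow> complex)" where
  "expop L x = (\<lambda>i. \<Sum>k. (L ^^ k) x i / of_nat (fact k))"

text \<open>expchain tau M j x = e^{tau_1 M_1} ... e^{tau_j M_j} x\<close>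
fun expchain :: "(nat \<Rightarrow> complex) \<Rightarrow> (nat \<Rightarrow> (nat \<Rightarrow> complex) \<Rightarrow> (nat \<Rightarrow> complex))
                 \<Rightarrow> nat \<Rightarrow> (nat \<Rightarrow> complex) \<Rightarrow> (nat \<Rightarrow> complex)" where
  "expchain \<tau> M 0 x = x"
| "expchain \<tau> M (Suc j) x = expchain \<tau> M j (expop (\<lambda>y i. \<tau> (Suc j) * M (Suc j) y i) x)"

definition Zplus :: "nat \<Rightarrow> nat \<Rightarrow> (nat \<Rightarrow> nat \<Rightarrow> complex) set" where
  "Zplus d n = {z \<in> Xdc_pow d n. \<exists>\<tau> M c. \<forall>j\<in>{1..n}.
       Im (\<tau> j) > 0 \<and> M j \<in> C1 d \<and> c j \<in> Xd d \<and> z j = expchain \<tau> M j (cvec (c j))}"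

end

theory Submission
  imports Defs
begin


lemma bform_add_l: "bform d (\<lambda>i. u i + v i) w = bform d u w + bform d v w"
  by (simp add: bform_def algebra_simps sum.distrib)
lemma bform_add_r: "bform d w (\<lambda>i. u i + v i) = bform d w u + bform d w v"
  by (simp add: bform_def algebra_simps sum.distrib)
lemma bform_diff_l: "bform d (\<lambda>i. u i - v i) w = bform d u w - bform d v w"
  by (simp add: bform_def algebra_simps sum_subtractf)
lemma bform_diff_r: "bform d w (\<lambda>i. u i - v i) = bform d w u - bform d w v"
  by (simp add: bform_def algebra_simps sum_subtractf)
lemma bform_scale_l: "bform d (\<lambda>i. c * u i) w = c * bform d u w"
  by (simp add: bform_def algebra_simps sum_distrib_left)
lemma bform_scale_r: "bform d w (\<lambda>i. c * u i) = c * bform d w u"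
  by (simp add: bform_def algebra_simps sum_distrib_left)
lemma bform_scale2_l: "bform d (\<lambda>i. u i * c) w = c * bform d u w"
  by (simp add: bform_def algebra_simps sum_distrib_left)
lemma bform_scale2_r: "bform d w (\<lambda>i. u i * c) = c * bform d w u"
  by (simp add: bform_def algebra_simps sum_distrib_left)
lemma bform_zero_l: "bform d (\<lambda>i. 0) w = 0" by (simp add: bform_def)
lemma bform_zero_r: "bform d w (\<lambda>i. 0) = 0" by (simp add: bform_def)
lemma bform_sym: "bform d u v = bform d v u"
  by (simp add: bform_def algebra_simps)
lemma bform_cvec: "bform d (cvec u) (cvec v) = complex_of_real (bform d u v)"
  by (simp add: bform_def cvec_def)

lemmas bform_lin = bform_add_l bform_add_r bform_diff_l bform_diff_r bform_scale_l bform_scale_r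
  bform_scale2_l bform_scale2_r bform_zero_l bform_zero_r

definition Eop :: "nat \<Rightarrow> complex \<Rightarrow> (nat \<Rightarrow> complex) \<Rightarrow> (nat \<Rightarrow> complex) \<Rightarrow> (nat \<Rightarrow> complex) \<Rightarrow> (nat \<Rightarrow> complex)" where
  "Eop d \<tau> A B x = (\<lambda>i. x i + sin \<tau> * (A i * bform d B x - B i * bform d A x)
      + (cos \<tau> - 1) * (A i * bform d A x + B i * bform d B x))"

lemma funpow_ell:
  fixes a b :: "nat \<Rightarrow> real"
  assumes aa: "bform d a a = 1" and bb: "bform d b b = 1" and ab: "bform d a b = 0"
  defines "A \<equiv> cvec a" and "B \<equiv> cvec b"
  shows "((\<lambda>y i. \<tau> * ell d a b y i) ^^ k) x = (\<lambda>i. (if k = 0 then x i else 0)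
     + of_real (sin_coeff k * fact k) * \<tau>^k * (A i * bform d B x - B i * bform d A x)
     + of_real ((cos_coeff k - (if k = 0 then 1 else 0)) * fact k) * \<tau>^k * (A i * bform d A x + B i * bform d B x))"
proof (induction k)
  case 0
  then show ?case by (simp add: sin_coeff_def cos_coeff_def)
next
  case (Suc k)
  have AA: "bform d A A = 1" and BB: "bform d B B = 1" and AB: "bform d A B = 0" and BA: "bform d B A = 0"
    using aa bb ab by (auto simp: A_def B_def bform_cvec bform_sym[of d b a])
  have s1: "sin_coeff (Suc k) * fact (Suc k) = cos_coeff k * fact k"
    by (simp add: sin_coeff_Suc)
  have c1: "cos_coeff (Suc k) * fact (Suc k) = - sin_coeff k * fact k"
    by (simp add: cos_coeff_Suc)
  have ell: "\<And>y. ell d a b y = (\<lambda>i. A i * bform d B y - B i * bform d A y)"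
    by (simp add: ell_def A_def B_def)
  show ?case
  proof (cases "k = 0")
    case True
    then show ?thesis by (simp add: ell sin_coeff_def cos_coeff_def algebra_simps)
  next
    case False
    have "(\<lambda>i. (if k = 0 then x i else 0) + Z i) = Z" for Z :: "nat \<Rightarrow> complex" using False by simp
    note IH = Suc.IH[unfolded this]
    have e: "(cos_coeff (Suc k) - (if Suc k = 0 then 1 else 0)) * fact (Suc k) = - sin_coeff k * fact k"
      using c1 by simp
    show ?thesis
      apply (subst funpow.simps(2), subst comp_def, subst IH)
      apply (simp only: s1 e ell)
      apply (simp add: bform_lin AA BB AB BA False)
      apply (rule ext)
      apply (simp add: algebra_simps)
      done
  qed
qed

lemma sums_cos_minus: "(\<lambda>n. (cos_coeff n - (if n = 0 then 1 else 0)) *\<^sub>R (\<tau>::complex)^n) sums (cos \<tau> - 1)"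
proof -
  have "(\<lambda>n. cos_coeff n *\<^sub>R \<tau>^n - (if n = 0 then 1 else 0)) sums (cos \<tau> - 1)"
    by (intro sums_diff cos_converges) (simp add: sums_single[of 0 "\<lambda>_. 1::complex", simplified])
  moreover have "(\<lambda>n. (cos_coeff n - (if n = 0 then 1 else 0)) *\<^sub>R \<tau>^n) = (\<lambda>n. cos_coeff n *\<^sub>R \<tau>^n - (if n = 0 then 1 else 0))"
    by (rule ext) (simp add: cos_coeff_def algebra_simps)
  ultimately show ?thesis by simp
qed

lemma expop_ell:
  fixes a b :: "nat \<Rightarrow> real"
  assumes aa: "bform d a a = 1" and bb: "bform d b b = 1" and ab: "bform d a b = 0"
  shows "expop (\<lambda>y i. \<tau> * ell d a b y i) x = Eop d \<tau> (cvec a) (cvec b) x"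
proof (rule ext)
  fix i
  define A where "A = cvec a"
  define B where "B = cvec b"
  define P where "P = A i * bform d B x - B i * bform d A x"
  define Q where "Q = A i * bform d A x + B i * bform d B x"
  have eq: "((\<lambda>y i. \<tau> * ell d a b y i) ^^ k) x i / of_nat (fact k) =
     (if k = 0 then x i else 0) + (sin_coeff k *\<^sub>R \<tau>^k) * P
       + ((cos_coeff k - (if k = 0 then 1 else 0)) *\<^sub>R \<tau>^k) * Q" for k
    unfolding funpow_ell[OF aa bb ab] A_def[symmetric] B_def[symmetric] P_def[symmetric] Q_def[symmetric]
    by (simp add: scaleR_conv_of_real field_simps)
  have "(\<lambda>k. ((\<lambda>y i. \<tau> * ell d a b y i) ^^ k) x i / of_nat (fact k)) sums (x i + sin \<tau> * P + (cos \<tau> - 1) * Q)"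
    unfolding eq
    by (intro sums_add sums_mult2 sin_converges sums_cos_minus) (simp add: sums_single[of 0 "\<lambda>_. x i", simplified])
  then show "expop (\<lambda>y i. \<tau> * ell d a b y i) x i = Eop d \<tau> (cvec a) (cvec b) x i"
    unfolding expop_def Eop_def P_def Q_def A_def B_def by (simp add: sums_iff)
qed



lemma Eop_isom:
  assumes AA: "bform d A A = 1" and BB: "bform d B B = 1" and AB: "bform d A B = 0"
  shows "bform d (Eop d \<tau> A B x) (Eop d \<tau> A B y) = bform d x y"
proof -
  have BA: "bform d B A = 0" using AB bform_sym by metis
  have sc: "(sin \<tau>)^2 + (cos \<tau>)^2 = 1" by simp
  define S where "S = sin \<tau>"
  define C where "C = cos \<tau>"
  have sc': "S^2 = 1 - C^2" using sc unfolding S_def C_def by (simp add: algebra_simps)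
  show ?thesis
    unfolding Eop_def S_def[symmetric] C_def[symmetric]
    apply (simp add: bform_lin AA BB AB BA)
    apply (simp only: bform_sym[of d x A] bform_sym[of d x B] bform_sym[of d y A] bform_sym[of d y B])
    using sc unfolding S_def[symmetric] C_def[symmetric] by algebra
qed


lemma Eop_inv:
  assumes AA: "bform d A A = 1" and BB: "bform d B B = 1" and AB: "bform d A B = 0"
  shows "Eop d (-\<tau>) A B (Eop d \<tau> A B x) = x"
proof (rule ext)
  fix i
  have BA: "bform d B A = 0" using AB bform_sym by metis
  have sc: "(sin \<tau>)^2 + (cos \<tau>)^2 = 1" by simp
  show "Eop d (-\<tau>) A B (Eop d \<tau> A B x) i = x i"
    unfolding Eop_def
    apply (simp add: bform_lin AA BB AB BA)
    using sc by algebra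
qed

lemma Evec_iff: "x \<in> Evec d \<longleftrightarrow> (\<forall>i>d. x i = 0)" by (simp add: Evec_def)

lemma Eop_Evec: "A \<in> Evec d \<Longrightarrow> B \<in> Evec d \<Longrightarrow> x \<in> Evec d \<Longrightarrow> Eop d \<tau> A B x \<in> Evec d"
  by (simp add: Evec_iff Eop_def)

definition hrefl :: "nat \<Rightarrow> (nat \<Rightarrow> 'a::field) \<Rightarrow> (nat \<Rightarrow> 'a) \<Rightarrow> (nat \<Rightarrow> 'a)" where
  "hrefl d v x = (\<lambda>i. x i - 2 * bform d v x / bform d v v * v i)"

lemma hrefl_isom:
  assumes "bform d v v \<noteq> 0"
  shows "bform d (hrefl d v x) (hrefl d v y) = bform d x y"
  unfolding hrefl_def using assms
  apply (simp only: bform_lin)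
  apply (simp add: bform_sym[of d x v] bform_sym[of d y v] field_simps)
  done

lemma hrefl_add: "hrefl d v (\<lambda>i. x i + y i) = (\<lambda>i. hrefl d v x i + hrefl d v y i)"
  unfolding hrefl_def by (rule ext) (simp add: bform_lin field_simps add_divide_distrib)

lemma hrefl_scale: "hrefl d v (\<lambda>i. c * x i) = (\<lambda>i. c * hrefl d v x i)"
  unfolding hrefl_def by (rule ext) (simp add: bform_lin field_simps)

lemma hrefl_cvec: "hrefl d (cvec v) (cvec x) = cvec (hrefl d v x)"
  unfolding hrefl_def bform_cvec by (rule ext) (simp add: cvec_def)

lemma hrefl_Evec: "v \<in> Evec d \<Longrightarrow> x \<in> Evec d \<Longrightarrow> hrefl d v x \<in> Evec d"
  by (simp add: Evec_iff hrefl_def)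

lemma Eop_conj:
  assumes "bform d p p \<noteq> 0"
  shows "hrefl d p (Eop d \<tau> A B x) = Eop d \<tau> (hrefl d p A) (hrefl d p B) (hrefl d p x)"
proof -
  have "Eop d \<tau> (hrefl d p A) (hrefl d p B) (hrefl d p x) = (\<lambda>i. hrefl d p x i + sin \<tau> * (hrefl d p A i * bform d B x - hrefl d p B i * bform d A x)
      + (cos \<tau> - 1) * (hrefl d p A i * bform d A x + hrefl d p B i * bform d B x))"
    unfolding Eop_def hrefl_isom[OF assms] ..
  also have "\<dots> = hrefl d p (Eop d \<tau> A B x)"
    unfolding Eop_def hrefl_def using assms
    by (rule_tac ext) (simp add: bform_lin field_simps)
  finally show ?thesis by simp
qed



lemma bform_neg_r: "bform d w (\<lambda>i. - u i) = - bform d w u"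
  by (simp add: bform_def sum_negf algebra_simps)
lemma bform_neg_l: "bform d (\<lambda>i. - u i) w = - bform d u w"
  by (simp add: bform_def sum_negf algebra_simps)

definition rot2 :: "nat \<Rightarrow> (nat \<Rightarrow> 'a::field) \<Rightarrow> (nat \<Rightarrow> 'a) \<Rightarrow> (nat \<Rightarrow> 'a) \<Rightarrow> (nat \<Rightarrow> 'a)" where
  "rot2 d e f x = hrefl d f (hrefl d (\<lambda>i. e i + f i) x)"

lemma rot2_map:
  fixes e f :: "nat \<Rightarrow> 'a::field_char_0"
  assumes "bform d e e = 1" "bform d f f = 1" "1 + bform d e f \<noteq> 0"
  shows "rot2 d e f e = f"
proof -
  have fe: "bform d f e = bform d e f" by (rule bform_sym)
  have 1: "bform d (\<lambda>i. e i + f i) (\<lambda>i. e i + f i) = 2 * (1 + bform d e f)"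
    using assms by (simp add: bform_lin fe)
  have 2: "bform d (\<lambda>i. e i + f i) e = 1 + bform d e f"
    using assms by (simp add: bform_lin fe)
  have "hrefl d (\<lambda>i. e i + f i) e = (\<lambda>i. - f i)"
  proof (rule ext)
    fix i
    have r: "2 * (1 + bform d e f) / (2 * (1 + bform d e f)) = (1::'a)"
    proof (rule divide_self)
      show "2 * (1 + bform d e f) \<noteq> (0::'a)" using assms(3) by (simp only: mult_eq_0_iff) simp
    qed
    show "hrefl d (\<lambda>i. e i + f i) e i = - f i"
      unfolding hrefl_def 1 2 r by simp
  qed
  then have "rot2 d e f e = hrefl d f (\<lambda>i. - f i)" unfolding rot2_def by simp
  also have "\<dots> = f" unfolding hrefl_def using assms
    by (rule_tac ext) (simp add: bform_neg_r)
  finally show ?thesis .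
qed

lemma rot2_fix:
  assumes "bform d e u = 0" "bform d f u = 0"
  shows "rot2 d e f u = u"
  unfolding rot2_def hrefl_def using assms by (simp add: bform_lin)

lemma rot2_isom:
  assumes "bform d f f \<noteq> 0" "bform d (\<lambda>i. e i + f i) (\<lambda>i. e i + f i) \<noteq> 0"
  shows "bform d (rot2 d e f x) (rot2 d e f y) = bform d x y"
  unfolding rot2_def using assms by (simp add: hrefl_isom)

lemma rot2_add: "rot2 d e f (\<lambda>i. x i + y i) = (\<lambda>i. rot2 d e f x i + rot2 d e f y i)"
  unfolding rot2_def by (simp add: hrefl_add)

lemma rot2_scale: "rot2 d e f (\<lambda>i. c * x i) = (\<lambda>i. c * rot2 d e f x i)"
  unfolding rot2_def by (simp add: hrefl_scale)

lemma cvec_add: "cvec (\<lambda>i. e i + f i) = (\<lambda>i. cvec e i + cvec f i)"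
  by (simp add: cvec_def)

lemma rot2_cvec: "rot2 d (cvec e) (cvec f) (cvec x) = cvec (rot2 d e f x)"
  unfolding rot2_def cvec_add[symmetric] hrefl_cvec ..

lemma rot2_Evec: "e \<in> Evec d \<Longrightarrow> f \<in> Evec d \<Longrightarrow> x \<in> Evec d \<Longrightarrow> rot2 d e f x \<in> Evec d"
  unfolding rot2_def by (intro hrefl_Evec) (auto simp: Evec_iff)

lemma rot2_self:
  fixes e :: "nat \<Rightarrow> 'a::field_char_0"
  assumes "bform d e e \<noteq> 0"
  shows "rot2 d e e x = x"
proof -
  have ee: "(\<lambda>i. e i + e i) = (\<lambda>i. 2 * e i)" by (rule ext) (rule mult_2[symmetric])
  have 1: "hrefl d (\<lambda>i. e i + e i) x = hrefl d e x"
    unfolding hrefl_def ee bform_scale_l bform_scale_r using assms by (rule_tac ext) simp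
  have 2: "bform d e (hrefl d e x) = - bform d e x"
    unfolding hrefl_def using assms by (simp only: bform_lin) simp
  have "hrefl d e (hrefl d e x) = x"
    apply (rule ext)
    apply (subst hrefl_def)
    apply (simp only: 2)
    apply (simp add: hrefl_def)
    done
  then show ?thesis unfolding rot2_def 1 by simp
qed

lemma Eop_conj_rot2:
  assumes "bform d f f \<noteq> 0" "bform d (\<lambda>i. e i + f i) (\<lambda>i. e i + f i) \<noteq> 0"
  shows "rot2 d e f (Eop d \<tau> A B x) = Eop d \<tau> (rot2 d e f A) (rot2 d e f B) (rot2 d e f x)"
  unfolding rot2_def using assms by (simp add: Eop_conj hrefl_isom)



definition VT :: "(nat \<Rightarrow> nat \<Rightarrow> 'a::topological_space) \<Rightarrow> (nat \<Rightarrow> 'a) \<Rightarrow> bool" where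
  "VT u v \<longleftrightarrow> (\<forall>i. ((\<lambda>m. u m i) \<longlongrightarrow> v i) sequentially)"

lemma VT_const: "VT (\<lambda>m. v) v" by (simp add: VT_def)

lemma VT_eq: "VT u v \<Longrightarrow> v = v' \<Longrightarrow> VT u v'" by simp

lemma tendsto_bform:
  fixes u v :: "nat \<Rightarrow> nat \<Rightarrow> 'a::real_normed_field"
  assumes "VT u u0" "VT v v0"
  shows "((\<lambda>m. bform d (u m) (v m)) \<longlongrightarrow> bform d u0 v0) sequentially"
  using assms unfolding VT_def bform_def by (intro tendsto_intros) auto

lemma VT_hrefl:
  fixes v x :: "nat \<Rightarrow> nat \<Rightarrow> 'a::real_normed_field"
  assumes "VT v v0" "VT x x0" "bform d v0 v0 \<noteq> 0"
  shows "VT (\<lambda>m. hrefl d (v m) (x m)) (hrefl d v0 x0)"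
  unfolding VT_def hrefl_def using assms
  by (intro allI tendsto_intros tendsto_bform) (auto simp: VT_def)

lemma VT_add:
  fixes u v :: "nat \<Rightarrow> nat \<Rightarrow> 'a::real_normed_vector"
  shows "VT u u0 \<Longrightarrow> VT v v0 \<Longrightarrow> VT (\<lambda>m i. u m i + v m i) (\<lambda>i. u0 i + v0 i)"
  unfolding VT_def by (auto intro: tendsto_intros)

lemma VT_scale:
  fixes u :: "nat \<Rightarrow> nat \<Rightarrow> 'a::real_normed_field"
  shows "(c \<longlongrightarrow> c0) sequentially \<Longrightarrow> VT u u0 \<Longrightarrow> VT (\<lambda>m i. c m * u m i) (\<lambda>i. c0 * u0 i)"
  unfolding VT_def by (auto intro: tendsto_intros)

lemma VT_div:
  fixes u :: "nat \<Rightarrow> nat \<Rightarrow> 'a::real_normed_field"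
  shows "(c \<longlongrightarrow> c0) sequentially \<Longrightarrow> c0 \<noteq> 0 \<Longrightarrow> VT u u0 \<Longrightarrow> VT (\<lambda>m i. u m i / c m) (\<lambda>i. u0 i / c0)"
  unfolding VT_def by (auto intro: tendsto_intros)

lemma VT_rot2:
  fixes e f x :: "nat \<Rightarrow> nat \<Rightarrow> 'a::real_normed_field"
  assumes "VT e e0" "VT f f0" "VT x x0" "bform d f0 f0 \<noteq> 0"
    "bform d (\<lambda>i. e0 i + f0 i) (\<lambda>i. e0 i + f0 i) \<noteq> 0"
  shows "VT (\<lambda>m. rot2 d (e m) (f m) (x m)) (rot2 d e0 f0 x0)"
  unfolding rot2_def using assms by (intro VT_hrefl VT_add) auto

lemma VT_Eop:
  assumes "(\<tau> \<longlongrightarrow> \<tau>0) sequentially" "VT A A0" "VT B B0" "VT x x0"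
  shows "VT (\<lambda>m. Eop d (\<tau> m) (A m) (B m) (x m)) (Eop d \<tau>0 A0 B0 x0)"
  unfolding Eop_def VT_def using assms
  by (intro allI tendsto_intros tendsto_bform) (auto simp: VT_def)

lemma VT_cvec: "VT u u0 \<Longrightarrow> VT (\<lambda>m. cvec (u m)) (cvec u0)"
  unfolding VT_def cvec_def by (auto intro: tendsto_intros)

lemma VT_Re: "VT w w0 \<Longrightarrow> VT (\<lambda>m i. Re (w m i)) (\<lambda>i. Re (w0 i))"
  unfolding VT_def by (auto intro: tendsto_intros)

lemma VT_Im: "VT w w0 \<Longrightarrow> VT (\<lambda>m i. Im (w m i)) (\<lambda>i. Im (w0 i))"
  unfolding VT_def by (auto intro: tendsto_intros)

lemma rho_pos:
  fixes a b c :: "nat \<Rightarrow> real"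
  assumes aa: "bform d a a = 1" and bb: "bform d b b = 1" and ab: "bform d a b = 0"
    and cc: "bform d c c = 1" and del: "a 0 * b d - a d * b 0 > 0"
  shows "(bform d a c)^2 + (bform d b c)^2 > 0"
proof (rule ccontr)
  assume "\<not> ?thesis"
  then have "(bform d a c)^2 + (bform d b c)^2 = 0" by (smt (verit) zero_le_power2)
  then have ac: "bform d a c = 0" and bc: "bform d b c = 0"
    by (simp_all add: sum_power2_eq_zero_iff)
  have ba: "bform d b a = 0" and ca: "bform d c a = 0" and cb: "bform d c b = 0"
    using ab ac bc bform_sym by metis+
  define p where "p = b 0 * c d - b d * c 0"
  define q where "q = c 0 * a d - c d * a 0"
  define r where "r = a 0 * b d - a d * b 0"
  define v where "v = (\<lambda>i. p * a i + q * b i + r * c i)"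
  have "bform d v v = p^2 + q^2 + r^2"
    unfolding v_def by (simp add: bform_lin aa bb cc ab ba ac ca bc cb power2_eq_square)
  moreover have "v 0 = 0" "v d = 0" unfolding v_def p_def q_def r_def by (simp_all add: algebra_simps)
  then have "bform d v v = - (\<Sum>j\<in>{1..d-1}. v j * v j)" by (simp add: bform_def)
  moreover have "(\<Sum>j\<in>{1..d-1}. v j * v j) \<ge> 0" by (intro sum_nonneg) simp
  moreover have "r^2 > 0" using del r_def by simp
  ultimately show False by (smt (verit) zero_le_power2)
qed



lemma expchain_shift:
  "expchain \<tau> M (Suc j) x = expop (\<lambda>y i. \<tau> 1 * M 1 y i) (expchain (\<lambda>k. \<tau> (Suc k)) (\<lambda>k. M (Suc k)) j x)"
proof (induction j arbitrary: x)
  case 0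
  then show ?case by simp
next
  case (Suc j)
  have "expchain \<tau> M (Suc (Suc j)) x = expchain \<tau> M (Suc j) (expop (\<lambda>y i. \<tau> (Suc (Suc j)) * M (Suc (Suc j)) y i) x)"
    by simp
  also have "\<dots> = expop (\<lambda>y i. \<tau> 1 * M 1 y i) (expchain (\<lambda>k. \<tau> (Suc k)) (\<lambda>k. M (Suc k)) j (expop (\<lambda>y i. \<tau> (Suc (Suc j)) * M (Suc (Suc j)) y i) x))"
    by (rule Suc.IH)
  finally show ?case by simp
qed

lemma expchain_cong:
  "(\<forall>k\<in>{1..j}. \<tau> k = \<tau>' k \<and> M k = M' k) \<Longrightarrow> expchain \<tau> M j x = expchain \<tau>' M' j x"
proof (induction j arbitrary: x)
  case 0
  then show ?case by simp
next
  case (Suc j)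
  then show ?case by simp
qed

lemma sinh_real_exp: "sinh (t::real) = (exp t - exp (- t)) / 2"
  by (simp add: sinh_def)
lemma cosh_real_exp: "cosh (t::real) = (exp t + exp (- t)) / 2"
  by (simp add: cosh_def)

lemma Eop_parts:
  fixes a b c :: "nat \<Rightarrow> real" and d :: nat
  defines "\<alpha> \<equiv> bform d a c" and "\<beta> \<equiv> bform d b c"
  shows "(\<lambda>i. Im (Eop d (Complex s t) (cvec a) (cvec b) (cvec c) i)) =
      (\<lambda>i. sinh t * (cos s * (\<beta> * a i - \<alpha> * b i) - sin s * (\<alpha> * a i + \<beta> * b i)))"
    and "(\<lambda>i. Re (Eop d (Complex s t) (cvec a) (cvec b) (cvec c) i)) =
      (\<lambda>i. c i + sin s * cosh t * (\<beta> * a i - \<alpha> * b i) + (cos s * cosh t - 1) * (\<alpha> * a i + \<beta> * b i))"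
  unfolding Eop_def bform_cvec \<alpha>_def[symmetric] \<beta>_def[symmetric]
  by (rule ext, simp add: cvec_def Im_sin Im_cos Re_sin Re_cos sinh_real_exp cosh_real_exp, simp add: field_simps)+



lemma w_decomp: "w = (\<lambda>i. cvec (\<lambda>i. Re (w i)) i + \<i> * cvec (\<lambda>i. Im (w i)) i)"
  by (rule ext) (simp add: cvec_def complex_eq_iff)

lemma bform_ReIm:
  fixes w :: "nat \<Rightarrow> complex"
  defines "X \<equiv> (\<lambda>i. Re (w i))" and "Y \<equiv> (\<lambda>i. Im (w i))"
  shows "bform d w w = of_real (bform d X X - bform d Y Y) + \<i> * of_real (2 * bform d X Y)"
proof -
  have "bform d w w = bform d (\<lambda>i. cvec X i + \<i> * cvec Y i) (\<lambda>i. cvec X i + \<i> * cvec Y i)"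
    unfolding X_def Y_def by (subst w_decomp, subst w_decomp, rule refl)
  also have "\<dots> = of_real (bform d X X - bform d Y Y) + \<i> * of_real (2 * bform d X Y)"
    by (simp add: bform_lin bform_cvec bform_sym[of d Y X] algebra_simps)
  finally show ?thesis .
qed

lemma Xdc_parts:
  fixes w :: "nat \<Rightarrow> complex"
  assumes "w \<in> Xdc d"
  shows "bform d (\<lambda>i. Re (w i)) (\<lambda>i. Re (w i)) - bform d (\<lambda>i. Im (w i)) (\<lambda>i. Im (w i)) = 1"
    and "bform d (\<lambda>i. Re (w i)) (\<lambda>i. Im (w i)) = 0"
    and "(\<lambda>i. Re (w i)) \<in> Evec d" and "(\<lambda>i. Im (w i)) \<in> Evec d"
proof -
  have "bform d w w = 1" "w \<in> Evec d" using assms by (auto simp: Xdc_def)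
  then show "bform d (\<lambda>i. Re (w i)) (\<lambda>i. Re (w i)) - bform d (\<lambda>i. Im (w i)) (\<lambda>i. Im (w i)) = 1"
    and "bform d (\<lambda>i. Re (w i)) (\<lambda>i. Im (w i)) = 0"
    and "(\<lambda>i. Re (w i)) \<in> Evec d" and "(\<lambda>i. Im (w i)) \<in> Evec d"
    unfolding bform_ReIm by (auto simp: complex_eq_iff Evec_iff)
qed

lemma sum_unit_nz:
  fixes e f :: "nat \<Rightarrow> 'a::field_char_0"
  assumes "bform d e e = 1" "bform d f f = 1" "1 + bform d e f \<noteq> 0"
  shows "bform d (\<lambda>i. e i + f i) (\<lambda>i. e i + f i) \<noteq> 0"
proof -
  have "bform d (\<lambda>i. e i + f i) (\<lambda>i. e i + f i) = 2 * (1 + bform d e f)"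
    using assms by (simp add: bform_lin bform_sym[of d f e])
  then show ?thesis using assms(3) by (metis mult_eq_0_iff zero_neq_numeral)
qed

lemma rot2_isom_unit:
  fixes e f :: "nat \<Rightarrow> 'a::field_char_0"
  assumes "bform d e e = 1" "bform d f f = 1" "1 + bform d e f \<noteq> 0"
  shows "bform d (rot2 d e f x) (rot2 d e f y) = bform d x y"
  using assms by (intro rot2_isom sum_unit_nz) auto

lemma rot2c_isom_unit:
  fixes e f :: "nat \<Rightarrow> real"
  assumes "bform d e e = 1" "bform d f f = 1" "1 + bform d e f \<noteq> 0"
  shows "bform d (cvec f) (cvec f) \<noteq> 0" "bform d (\<lambda>i. cvec e i + cvec f i) (\<lambda>i. cvec e i + cvec f i) \<noteq> 0"
proof -
  show "bform d (cvec f) (cvec f) \<noteq> 0" using assms by (simp add: bform_cvec)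
  have "bform d (\<lambda>i. e i + f i) (\<lambda>i. e i + f i) \<noteq> 0" using sum_unit_nz[OF assms] .
  then show "bform d (\<lambda>i. cvec e i + cvec f i) (\<lambda>i. cvec e i + cvec f i) \<noteq> 0"
    unfolding cvec_add[symmetric] bform_cvec by simp
qed

lemma bform_div_self:
  fixes x :: "nat \<Rightarrow> real"
  assumes "bform d x x > 0"
  shows "bform d (\<lambda>i. x i / sqrt (bform d x x)) (\<lambda>i. x i / sqrt (bform d x x)) = 1"
proof -
  have e: "(\<lambda>i. x i / sqrt (bform d x x)) = (\<lambda>i. (1 / sqrt (bform d x x)) * x i)" by auto
  show ?thesis unfolding e bform_lin using assms by (simp add: power2_eq_square[symmetric])
qed


lemma Evec_div: "x \<in> Evec d \<Longrightarrow> (\<lambda>i. x i / (c::'a::field)) \<in> Evec d"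
  by (simp add: Evec_iff)

lemma section_point:
  fixes a b c :: "nat \<Rightarrow> real" and w :: "nat \<Rightarrow> complex" and d :: nat and s :: real
    and \<alpha> \<beta> \<rho> Y t' :: real and u x y X0 e1 f1 e2 f2 :: "nat \<Rightarrow> real" and \<zeta> :: "nat \<Rightarrow> complex"
  assumes \<alpha>_def: "\<alpha> = bform d a c" and \<beta>_def: "\<beta> = bform d b c" and \<rho>_def: "\<rho> = \<alpha>^2 + \<beta>^2"
    and u_def: "u = (\<lambda>i. cos s * (\<beta> * a i - \<alpha> * b i) - sin s * (\<alpha> * a i + \<beta> * b i))"
    and x_def: "x = (\<lambda>i. Re (w i))" and y_def: "y = (\<lambda>i. Im (w i))" and Y_def: "Y = bform d y y"
    and t'_def: "t' = arsinh (sqrt (Y / \<rho>))"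
    and \<zeta>_def: "\<zeta> = Eop d (Complex s t') (cvec a) (cvec b) (cvec c)"
    and X0_def: "X0 = (\<lambda>i. Re (\<zeta> i))"
    and e1_def: "e1 = (\<lambda>i. X0 i / sqrt (bform d X0 X0))" and f1_def: "f1 = (\<lambda>i. x i / sqrt (bform d x x))"
    and e2_def: "e2 = rot2 d e1 f1 (\<lambda>i. u i / sqrt \<rho>)" and f2_def: "f2 = (\<lambda>i. y i / sqrt Y)"
  assumes aE: "a \<in> Evec d" and bE: "b \<in> Evec d" and aa: "bform d a a = 1" and bb: "bform d b b = 1"
    and ab: "bform d a b = 0" and cX: "c \<in> Xd d" and wX: "w \<in> Xdc d"
    and rpos: "\<rho> > 0" and Ypos: "Y > 0" and h1: "1 + bform d e1 f1 \<noteq> 0" and h2: "1 + bform d e2 f2 \<noteq> 0"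
  shows "t' > 0" and "\<And>v. v \<in> Evec d \<Longrightarrow> rot2 d e2 f2 (rot2 d e1 f1 v) \<in> Evec d"
    and "\<And>v v'. bform d (rot2 d e2 f2 (rot2 d e1 f1 v)) (rot2 d e2 f2 (rot2 d e1 f1 v')) = bform d v v'"
    and "w = Eop d (Complex s t') (cvec (rot2 d e2 f2 (rot2 d e1 f1 a))) (cvec (rot2 d e2 f2 (rot2 d e1 f1 b)))
               (cvec (rot2 d e2 f2 (rot2 d e1 f1 c)))"
proof -
  have cc: "bform d c c = 1" and cE: "c \<in> Evec d" using cX by (auto simp: Xd_def)
  have ba: "bform d b a = 0" using ab bform_sym by metis
  define Y0 where "Y0 = (\<lambda>i. Im (\<zeta> i))"
  have Y0eq: "Y0 = (\<lambda>i. sinh t' * u i)"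
    unfolding Y0_def \<zeta>_def u_def \<alpha>_def \<beta>_def by (rule Eop_parts(1))
  have sq: "sqrt (Y / \<rho>) > 0" using rpos Ypos by simp
  have sh: "sinh t' = sqrt (Y / \<rho>)" unfolding t'_def by simp
  have "0 < sinh t'" unfolding sh by (rule sq)
  then show tpos: "t' > 0" by simp
  have uu: "bform d u u = \<rho>"
    unfolding u_def \<rho>_def apply (simp add: bform_lin aa bb ab ba)
    using sin_cos_squared_add[of s] by algebra
  have Y0Y0: "bform d Y0 Y0 = Y"
  proof -
    have "bform d Y0 Y0 = (sinh t')^2 * \<rho>" unfolding Y0eq bform_lin uu by (simp add: power2_eq_square)
    also have "\<dots> = Y" unfolding sh using rpos Ypos by simp
    finally show ?thesis .
  qed
  have AA: "bform d (cvec a) (cvec a) = 1" "bform d (cvec b) (cvec b) = 1" "bform d (cvec a) (cvec b) = 0"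
    using aa bb ab by (simp_all add: bform_cvec)
  have cvE: "cvec v \<in> Evec d" if "v \<in> Evec d" for v using that by (simp add: Evec_iff cvec_def)
  have \<zeta>X: "\<zeta> \<in> Xdc d"
    unfolding Xdc_def \<zeta>_def using Eop_isom[OF AA] Eop_Evec[OF cvE[OF aE] cvE[OF bE] cvE[OF cE]] cc
    by (simp add: bform_cvec)
  note zp = Xdc_parts[OF \<zeta>X, folded X0_def Y0_def]
  note wp = Xdc_parts[OF wX, folded x_def y_def Y_def]
  have X0X0: "bform d X0 X0 = 1 + Y" using zp(1) Y0Y0 by simp
  have xx: "bform d x x = 1 + Y" using wp(1) by simp
  define N where "N = sqrt (1 + Y)"
  have Npos: "N > 0" unfolding N_def using Ypos by simp
  have X0u: "bform d X0 u = 0"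
  proof -
    have "sinh t' * bform d X0 u = 0" using zp(2) unfolding Y0eq bform_lin .
    then show ?thesis using tpos by simp
  qed
  have e1e1: "bform d e1 e1 = 1" unfolding e1_def by (rule bform_div_self) (simp add: X0X0 Ypos add_pos_pos)
  have f1f1: "bform d f1 f1 = 1" unfolding f1_def by (rule bform_div_self) (simp add: xx Ypos add_pos_pos)
  have k1e1: "rot2 d e1 f1 e1 = f1" by (rule rot2_map[OF e1e1 f1f1 h1])
  have X0eq: "X0 = (\<lambda>i. N * e1 i)" unfolding e1_def X0X0 N_def[symmetric] using Npos by auto
  have xeq: "x = (\<lambda>i. N * f1 i)" unfolding f1_def xx N_def[symmetric] using Npos by auto
  have k1X0: "rot2 d e1 f1 X0 = x" unfolding X0eq rot2_scale k1e1 xeq ..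
  define uh where "uh = (\<lambda>i. u i / sqrt \<rho>)"
  have uhuh: "bform d uh uh = 1" unfolding uh_def using bform_div_self[of d u] uu rpos by simp
  have e1uh: "bform d e1 uh = 0"
  proof -
    have e: "e1 = (\<lambda>i. (1 / sqrt (bform d X0 X0)) * X0 i)" "uh = (\<lambda>i. (1 / sqrt \<rho>) * u i)"
      unfolding e1_def uh_def by auto
    show ?thesis unfolding e bform_lin X0u by simp
  qed
  have e2e2: "bform d e2 e2 = 1" unfolding e2_def uh_def[symmetric] rot2_isom_unit[OF e1e1 f1f1 h1] by (rule uhuh)
  have f1e2: "bform d f1 e2 = 0"
  proof -
    have "bform d f1 e2 = bform d (rot2 d e1 f1 e1) (rot2 d e1 f1 uh)"
      unfolding k1e1 e2_def uh_def ..
    also have "\<dots> = 0" unfolding rot2_isom_unit[OF e1e1 f1f1 h1] by (rule e1uh)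
    finally show ?thesis .
  qed
  have f2f2: "bform d f2 f2 = 1" unfolding f2_def Y_def by (rule bform_div_self) (use Ypos Y_def in simp)
  have f1f2: "bform d f1 f2 = 0"
  proof -
    have e: "f1 = (\<lambda>i. (1 / sqrt (bform d x x)) * x i)" "f2 = (\<lambda>i. (1 / sqrt Y) * y i)"
      unfolding f1_def f2_def by auto
    show ?thesis unfolding e bform_lin wp(2) by simp
  qed
  have k2e2: "rot2 d e2 f2 e2 = f2" by (rule rot2_map[OF e2e2 f2f2 h2])
  have k2f1: "rot2 d e2 f2 f1 = f1" by (rule rot2_fix) (use f1e2 f1f2 bform_sym in metis)+
  have KX0: "rot2 d e2 f2 (rot2 d e1 f1 X0) = x" unfolding k1X0 unfolding xeq rot2_scale k2f1 ..
  have shr: "sinh t' * sqrt \<rho> = sqrt Y" unfolding sh using rpos Ypos by (simp add: real_sqrt_divide)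
  have Y0eq2: "Y0 = (\<lambda>i. (sinh t' * sqrt \<rho>) * uh i)" unfolding Y0eq uh_def using rpos by auto
  have yeq: "y = (\<lambda>i. sqrt Y * f2 i)" unfolding f2_def using Ypos by auto
  have KY0: "rot2 d e2 f2 (rot2 d e1 f1 Y0) = y"
    unfolding Y0eq2 rot2_scale e2_def[folded uh_def, symmetric] k2e2 shr yeq ..
  have nz1: "bform d (cvec f1) (cvec f1) \<noteq> 0" "bform d (\<lambda>i. cvec e1 i + cvec f1 i) (\<lambda>i. cvec e1 i + cvec f1 i) \<noteq> 0"
    using rot2c_isom_unit[OF e1e1 f1f1 h1] by auto
  have nz2: "bform d (cvec f2) (cvec f2) \<noteq> 0" "bform d (\<lambda>i. cvec e2 i + cvec f2 i) (\<lambda>i. cvec e2 i + cvec f2 i) \<noteq> 0"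
    using rot2c_isom_unit[OF e2e2 f2f2 h2] by auto
  have "rot2 d (cvec e2) (cvec f2) (rot2 d (cvec e1) (cvec f1) \<zeta>) = w"
  proof -
    have "rot2 d (cvec e2) (cvec f2) (rot2 d (cvec e1) (cvec f1) \<zeta>)
       = rot2 d (cvec e2) (cvec f2) (rot2 d (cvec e1) (cvec f1) (\<lambda>i. cvec X0 i + \<i> * cvec Y0 i))"
      unfolding X0_def Y0_def by (subst w_decomp[of \<zeta>]) (rule refl)
    also have "\<dots> = (\<lambda>i. cvec x i + \<i> * cvec y i)"
      unfolding rot2_add rot2_scale rot2_cvec KX0 KY0 ..
    also have "\<dots> = w" unfolding x_def y_def by (rule w_decomp[symmetric])
    finally show ?thesis .
  qed
  moreover have "rot2 d (cvec e2) (cvec f2) (rot2 d (cvec e1) (cvec f1) \<zeta>) =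
     Eop d (Complex s t') (cvec (rot2 d e2 f2 (rot2 d e1 f1 a))) (cvec (rot2 d e2 f2 (rot2 d e1 f1 b)))
               (cvec (rot2 d e2 f2 (rot2 d e1 f1 c)))"
    unfolding \<zeta>_def Eop_conj_rot2[OF nz1] Eop_conj_rot2[OF nz2] rot2_cvec ..
  ultimately show "w = Eop d (Complex s t') (cvec (rot2 d e2 f2 (rot2 d e1 f1 a))) (cvec (rot2 d e2 f2 (rot2 d e1 f1 b)))
               (cvec (rot2 d e2 f2 (rot2 d e1 f1 c)))" by simp
  show "bform d (rot2 d e2 f2 (rot2 d e1 f1 v)) (rot2 d e2 f2 (rot2 d e1 f1 v')) = bform d v v'" for v v'
    unfolding rot2_isom_unit[OF e2e2 f2f2 h2] rot2_isom_unit[OF e1e1 f1f1 h1] ..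
  have uE: "u \<in> Evec d" unfolding u_def using aE bE by (simp add: Evec_iff)
  have e1E: "e1 \<in> Evec d" unfolding e1_def by (rule Evec_div) (use zp(3) in simp)
  have f1E: "f1 \<in> Evec d" unfolding f1_def by (rule Evec_div) (use wp(3) in simp)
  have e2E: "e2 \<in> Evec d" unfolding e2_def by (intro rot2_Evec e1E f1E Evec_div uE)
  have f2E: "f2 \<in> Evec d" unfolding f2_def by (rule Evec_div) (use wp(4) in simp)
  show "v \<in> Evec d \<Longrightarrow> rot2 d e2 f2 (rot2 d e1 f1 v) \<in> Evec d" for v
    by (intro rot2_Evec e1E f1E e2E f2E)
qed



lemma Eop_Xdc:
  fixes a b c :: "nat \<Rightarrow> real"
  assumes aE: "a \<in> Evec d" and bE: "b \<in> Evec d" and aa: "bform d a a = 1" and bb: "bform d b b = 1"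
    and ab: "bform d a b = 0" and cX: "c \<in> Xd d"
  shows "Eop d \<tau> (cvec a) (cvec b) (cvec c) \<in> Xdc d"
proof -
  have cc: "bform d c c = 1" and cE: "c \<in> Evec d" using cX by (auto simp: Xd_def)
  have AA: "bform d (cvec a) (cvec a) = 1" "bform d (cvec b) (cvec b) = 1" "bform d (cvec a) (cvec b) = 0"
    using aa bb ab by (simp_all add: bform_cvec)
  have cvE: "cvec v \<in> Evec d" if "v \<in> Evec d" for v using that by (simp add: Evec_iff cvec_def)
  show ?thesis
    unfolding Xdc_def using Eop_isom[OF AA] Eop_Evec[OF cvE[OF aE] cvE[OF bE] cvE[OF cE]] cc
    by (simp add: bform_cvec)
qed

lemma u_norm:
  fixes a b :: "nat \<Rightarrow> real"
  assumes aa: "bform d a a = 1" and bb: "bform d b b = 1" and ab: "bform d a b = 0"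
  shows "bform d (\<lambda>i. cos s * (\<beta> * a i - \<alpha> * b i) - sin s * (\<alpha> * a i + \<beta> * b i))
                 (\<lambda>i. cos s * (\<beta> * a i - \<alpha> * b i) - sin s * (\<alpha> * a i + \<beta> * b i)) = \<alpha>^2 + \<beta>^2"
proof -
  have ba: "bform d b a = 0" using ab bform_sym by metis
  show ?thesis apply (simp add: bform_lin aa bb ab ba)
    using sin_cos_squared_add[of s] by algebra
qed


lemma ev_pos: "((f::nat \<Rightarrow> real) \<longlongrightarrow> l) sequentially \<Longrightarrow> l > c \<Longrightarrow> eventually (\<lambda>m. f m > c) sequentially"
  by (rule order_tendstoD(1))

lemma section_seq:
  fixes a b c :: "nat \<Rightarrow> real" and w :: "nat \<Rightarrow> nat \<Rightarrow> complex" and \<tau>1 :: complex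
  assumes aE: "a \<in> Evec d" and bE: "b \<in> Evec d" and aa: "bform d a a = 1" and bb: "bform d b b = 1"
    and ab: "bform d a b = 0" and del: "a 0 * b d - a d * b 0 > 0" and cX: "c \<in> Xd d"
    and tpos: "Im \<tau>1 > 0"
    and lim: "VT w (Eop d \<tau>1 (cvec a) (cvec b) (cvec c))"
  shows "\<exists>\<tau>s as bs cs. (\<tau>s \<longlongrightarrow> \<tau>1) sequentially \<and> VT as a \<and> VT bs b \<and>
     eventually (\<lambda>m. w m \<in> Xdc d \<longrightarrow> Im (\<tau>s m) > 0 \<and> as m \<in> Evec d \<and> bs m \<in> Evec d \<and>
        bform d (as m) (as m) = 1 \<and> bform d (bs m) (bs m) = 1 \<and> bform d (as m) (bs m) = 0 \<and>
        as m 0 * bs m d - as m d * bs m 0 > 0 \<and> cs m \<in> Xd d \<and>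
        w m = Eop d (\<tau>s m) (cvec (as m)) (cvec (bs m)) (cvec (cs m))) sequentially"
proof -
  obtain s t where \<tau>1: "\<tau>1 = Complex s t" by (cases \<tau>1)
  have t0: "t > 0" using tpos \<tau>1 by simp
  have cc: "bform d c c = 1" and cE: "c \<in> Evec d" using cX by (auto simp: Xd_def)
  define \<alpha> where "\<alpha> = bform d a c"
  define \<beta> where "\<beta> = bform d b c"
  define \<rho> where "\<rho> = \<alpha>^2 + \<beta>^2"
  define u where "u = (\<lambda>i. cos s * (\<beta> * a i - \<alpha> * b i) - sin s * (\<alpha> * a i + \<beta> * b i))"
  have rpos: "\<rho> > 0" unfolding \<rho>_def \<alpha>_def \<beta>_def by (rule rho_pos[OF aa bb ab cc del])
  have uu: "bform d u u = \<rho>" unfolding u_def \<rho>_def by (rule u_norm[OF aa bb ab])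
  define z1 where "z1 = Eop d \<tau>1 (cvec a) (cvec b) (cvec c)"
  define xi where "xi = (\<lambda>i. Re (z1 i))"
  define yi where "yi = (\<lambda>i. Im (z1 i))"
  have yi_eq: "yi = (\<lambda>i. sinh t * u i)"
    unfolding yi_def z1_def \<tau>1 u_def \<alpha>_def \<beta>_def by (rule Eop_parts(1))
  have z1X: "z1 \<in> Xdc d" unfolding z1_def by (rule Eop_Xdc[OF aE bE aa bb ab cX])
  define Yi where "Yi = bform d yi yi"
  have Yi_eq: "Yi = (sinh t)^2 * \<rho>" unfolding Yi_def yi_eq bform_lin uu by (simp add: power2_eq_square)
  have Yipos: "Yi > 0" unfolding Yi_eq using rpos t0 by simp
  have xixi: "bform d xi xi = 1 + Yi" using Xdc_parts(1)[OF z1X] unfolding xi_def[symmetric] yi_def[symmetric] Yi_def by simp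
  define x where "x = (\<lambda>m i. Re (w m i))"
  define y where "y = (\<lambda>m i. Im (w m i))"
  define Y where "Y = (\<lambda>m. bform d (y m) (y m))"
  define t' where "t' = (\<lambda>m. arsinh (sqrt (Y m / \<rho>)))"
  define \<zeta> where "\<zeta> = (\<lambda>m. Eop d (Complex s (t' m)) (cvec a) (cvec b) (cvec c))"
  define X0 where "X0 = (\<lambda>m i. Re (\<zeta> m i))"
  define e1 where "e1 = (\<lambda>m i. X0 m i / sqrt (bform d (X0 m) (X0 m)))"
  define f1 where "f1 = (\<lambda>m i. x m i / sqrt (bform d (x m) (x m)))"
  define e2 where "e2 = (\<lambda>m. rot2 d (e1 m) (f1 m) (\<lambda>i. u i / sqrt \<rho>))"
  define f2 where "f2 = (\<lambda>m i. y m i / sqrt (Y m))"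
  define K where "K = (\<lambda>m v. rot2 d (e2 m) (f2 m) (rot2 d (e1 m) (f1 m) v))"
  have Vx: "VT x xi" unfolding x_def xi_def using lim unfolding z1_def[symmetric] by (rule VT_Re)
  have Vy: "VT y yi" unfolding y_def yi_def using lim unfolding z1_def[symmetric] by (rule VT_Im)
  have LY: "(Y \<longlongrightarrow> Yi) sequentially" unfolding Y_def Yi_def using Vy Vy by (rule tendsto_bform)
  have Lt: "(t' \<longlongrightarrow> t) sequentially"
  proof -
    have "(t' \<longlongrightarrow> arsinh (sqrt (Yi / \<rho>))) sequentially"
      unfolding t'_def using LY rpos by (intro tendsto_intros) auto
    moreover have "arsinh (sqrt (Yi / \<rho>)) = t" unfolding Yi_eq using rpos t0
      by (simp add: real_sqrt_abs arsinh_sinh_real)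
    ultimately show ?thesis by simp
  qed
  have L\<tau>: "((\<lambda>m. Complex s (t' m)) \<longlongrightarrow> \<tau>1) sequentially" unfolding \<tau>1 by (intro tendsto_intros Lt)
  have V\<zeta>: "VT \<zeta> z1" unfolding \<zeta>_def z1_def by (intro VT_Eop L\<tau> VT_const)
  have VX0: "VT X0 xi" unfolding X0_def xi_def using V\<zeta> by (rule VT_Re)
  define eh where "eh = (\<lambda>i. xi i / sqrt (bform d xi xi))"
  have xipos: "bform d xi xi > 0" unfolding xixi using Yipos by simp
  have Ve1: "VT e1 eh" unfolding e1_def eh_def
    by (intro VT_div VX0 tendsto_intros tendsto_bform) (use xipos in auto)
  have Vf1: "VT f1 eh" unfolding f1_def eh_def
    by (intro VT_div Vx tendsto_intros tendsto_bform) (use xipos in auto)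
  have eheh: "bform d eh eh = 1" unfolding eh_def by (rule bform_div_self[OF xipos])
  have ehnz: "bform d (\<lambda>i. eh i + eh i) (\<lambda>i. eh i + eh i) \<noteq> 0" by (rule sum_unit_nz) (use eheh in auto)
  define uh where "uh = (\<lambda>i. u i / sqrt \<rho>)"
  have uhuh: "bform d uh uh = 1" unfolding uh_def using bform_div_self[of d u] uu rpos by simp
  have uhnz: "bform d (\<lambda>i. uh i + uh i) (\<lambda>i. uh i + uh i) \<noteq> 0" by (rule sum_unit_nz) (use uhuh in auto)
  have Ve2: "VT e2 uh"
  proof -
    have "VT e2 (rot2 d eh eh uh)" unfolding e2_def uh_def[symmetric]
      by (intro VT_rot2 Ve1 Vf1 VT_const) (use eheh ehnz in auto)
    then show ?thesis using rot2_self[of d eh uh] eheh by simp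
  qed
  have Vf2: "VT f2 uh"
  proof -
    have "VT f2 (\<lambda>i. yi i / sqrt Yi)" unfolding f2_def
      by (intro VT_div Vy LY tendsto_intros) (use Yipos in auto)
    moreover have "(\<lambda>i. yi i / sqrt Yi) = uh"
      unfolding yi_eq Yi_eq uh_def using t0 rpos by (auto simp: real_sqrt_mult)
    ultimately show ?thesis by simp
  qed
  have VK: "VT (\<lambda>m. K m v) v" for v
  proof -
    have "VT (\<lambda>m. K m v) (rot2 d uh uh (rot2 d eh eh v))" unfolding K_def
      by (intro VT_rot2 Ve1 Vf1 Ve2 Vf2 VT_const) (use eheh ehnz uhuh uhnz in auto)
    then show ?thesis using rot2_self[of d eh] rot2_self[of d uh] eheh uhuh by simp
  qed
  have ev1: "eventually (\<lambda>m. Y m > 0) sequentially" using ev_pos[OF LY Yipos] .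
  have ev2: "eventually (\<lambda>m. 1 + bform d (e1 m) (f1 m) > 1) sequentially"
  proof (rule ev_pos)
    show "((\<lambda>m. 1 + bform d (e1 m) (f1 m)) \<longlongrightarrow> 1 + bform d eh eh) sequentially"
      by (intro tendsto_intros tendsto_bform Ve1 Vf1)
  qed (use eheh in simp)
  have ev3: "eventually (\<lambda>m. 1 + bform d (e2 m) (f2 m) > 1) sequentially"
  proof (rule ev_pos)
    show "((\<lambda>m. 1 + bform d (e2 m) (f2 m)) \<longlongrightarrow> 1 + bform d uh uh) sequentially"
      by (intro tendsto_intros tendsto_bform Ve2 Vf2)
  qed (use uhuh in simp)
  have ev4: "eventually (\<lambda>m. K m a 0 * K m b d - K m a d * K m b 0 > 0) sequentially"
  proof (rule ev_pos)
    show "((\<lambda>m. K m a 0 * K m b d - K m a d * K m b 0) \<longlongrightarrow> a 0 * b d - a d * b 0) sequentially"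
      using VK[of a] VK[of b] unfolding VT_def by (intro tendsto_intros) auto
  qed (rule del)
  have main: "eventually (\<lambda>m. w m \<in> Xdc d \<longrightarrow> Im (Complex s (t' m)) > 0 \<and> K m a \<in> Evec d \<and> K m b \<in> Evec d \<and>
        bform d (K m a) (K m a) = 1 \<and> bform d (K m b) (K m b) = 1 \<and> bform d (K m a) (K m b) = 0 \<and>
        K m a 0 * K m b d - K m a d * K m b 0 > 0 \<and> K m c \<in> Xd d \<and>
        w m = Eop d (Complex s (t' m)) (cvec (K m a)) (cvec (K m b)) (cvec (K m c))) sequentially"
    using ev1 ev2 ev3 ev4
  proof eventually_elim
    case (elim m)
    show ?case
    proof
      assume wX: "w m \<in> Xdc d"
      have h1: "1 + bform d (e1 m) (f1 m) \<noteq> 0" and h2: "1 + bform d (e2 m) (f2 m) \<noteq> 0" using elim by auto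
      have xm: "x m = (\<lambda>i. Re (w m i))" and ym: "y m = (\<lambda>i. Im (w m i))" and Ym: "Y m = bform d (y m) (y m)"
        and tm: "t' m = arsinh (sqrt (Y m / \<rho>))"
        and zm: "\<zeta> m = Eop d (Complex s (t' m)) (cvec a) (cvec b) (cvec c)"
        and X0m: "X0 m = (\<lambda>i. Re (\<zeta> m i))"
        and e1m: "e1 m = (\<lambda>i. X0 m i / sqrt (bform d (X0 m) (X0 m)))"
        and f1m: "f1 m = (\<lambda>i. x m i / sqrt (bform d (x m) (x m)))"
        and e2m: "e2 m = rot2 d (e1 m) (f1 m) (\<lambda>i. u i / sqrt \<rho>)"
        and f2m: "f2 m = (\<lambda>i. y m i / sqrt (Y m))"
        by (simp_all add: x_def y_def Y_def t'_def \<zeta>_def X0_def e1_def f1_def e2_def f2_def)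
      have Ypos: "Y m > 0" using elim by simp
      note SP = section_point[OF \<alpha>_def \<beta>_def \<rho>_def u_def xm ym Ym tm zm X0m e1m f1m e2m f2m aE bE aa bb ab cX wX rpos Ypos h1 h2,
         folded K_def]
      have KE: "K m v \<in> Evec d" if "v \<in> Evec d" for v using SP(2)[OF that] unfolding K_def .
      have KB: "bform d (K m v) (K m v') = bform d v v'" for v v' using SP(3) unfolding K_def .
      have ba: "bform d b a = 0" using ab bform_sym by metis
      show "Im (Complex s (t' m)) > 0 \<and> K m a \<in> Evec d \<and> K m b \<in> Evec d \<and>
        bform d (K m a) (K m a) = 1 \<and> bform d (K m b) (K m b) = 1 \<and> bform d (K m a) (K m b) = 0 \<and>
        K m a 0 * K m b d - K m a d * K m b 0 > 0 \<and> K m c \<in> Xd d \<and>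
        w m = Eop d (Complex s (t' m)) (cvec (K m a)) (cvec (K m b)) (cvec (K m c))"
        using SP(1) SP(4)[unfolded K_def[symmetric]] KE[OF aE] KE[OF bE] KE[OF cE] KB aa bb ab cc elim
        by (simp add: Xd_def K_def)
    qed
  qed
  show ?thesis
    by (rule exI[of _ "\<lambda>m. Complex s (t' m)"], rule exI[of _ "\<lambda>m. K m a"], rule exI[of _ "\<lambda>m. K m b"],
        rule exI[of _ "\<lambda>m. K m c"]) (use L\<tau> VK main in blast)
qed



definition Zp :: "nat \<Rightarrow> nat \<Rightarrow> (nat \<Rightarrow> nat \<Rightarrow> complex) set" where
  "Zp d n = {z. \<exists>\<tau> M c. \<forall>j\<in>{1..n}.
       Im (\<tau> j) > 0 \<and> M j \<in> C1 d \<and> c j \<in> Xd d \<and> z j = expchain \<tau> M j (cvec (c j))}"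

definition Xc :: "nat \<Rightarrow> nat \<Rightarrow> (nat \<Rightarrow> nat \<Rightarrow> complex) \<Rightarrow> bool" where
  "Xc d n z \<longleftrightarrow> (\<forall>j\<in>{1..n}. z j \<in> Xdc d)"

lemma cvec_Evec: "v \<in> Evec d \<Longrightarrow> cvec v \<in> Evec d" by (simp add: Evec_iff cvec_def)

lemma core:
  "z \<in> Zp d n \<Longrightarrow> (\<forall>j. VT (\<lambda>m. W m j) (z j)) \<Longrightarrow> eventually (\<lambda>m. Xc d n (W m) \<longrightarrow> W m \<in> Zp d n) sequentially"
proof (induction n arbitrary: z W)
  case 0
  then show ?case by (simp add: Zp_def)
next
  case (Suc n)
  from Suc.prems(1) obtain \<tau> M c where H: "\<forall>j\<in>{1..Suc n}.
       Im (\<tau> j) > 0 \<and> M j \<in> C1 d \<and> c j \<in> Xd d \<and> z j = expchain \<tau> M j (cvec (c j))"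
    unfolding Zp_def by blast
  have H1: "Im (\<tau> 1) > 0" "M 1 \<in> C1 d" "c 1 \<in> Xd d" "z 1 = expchain \<tau> M 1 (cvec (c 1))" using H by auto
  obtain a b where M1: "M 1 = ell d a b" and aE: "a \<in> Evec d" and bE: "b \<in> Evec d" and aa: "bform d a a = 1"
    and bb: "bform d b b = 1" and ab: "bform d a b = 0" and del: "a 0 * b d - a d * b 0 > 0"
    using H1(2) unfolding C1_def by blast
  have AA: "bform d (cvec a) (cvec a) = 1" "bform d (cvec b) (cvec b) = 1" "bform d (cvec a) (cvec b) = 0"
    using aa bb ab by (simp_all add: bform_cvec)
  have E1: "expop (\<lambda>y i. \<tau> 1 * M 1 y i) = Eop d (\<tau> 1) (cvec a) (cvec b)"
    unfolding M1 by (rule ext) (rule expop_ell[OF aa bb ab])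
  have z1: "z 1 = Eop d (\<tau> 1) (cvec a) (cvec b) (cvec (c 1))"
    using H1(4) E1 by simp
  have lim1: "VT (\<lambda>m. W m 1) (Eop d (\<tau> 1) (cvec a) (cvec b) (cvec (c 1)))"
    using Suc.prems(2) z1 by metis
  obtain \<tau>s as bs cs where L\<tau>: "(\<tau>s \<longlongrightarrow> \<tau> 1) sequentially" and Va: "VT as a" and Vb: "VT bs b"
    and evS: "eventually (\<lambda>m. W m 1 \<in> Xdc d \<longrightarrow> Im (\<tau>s m) > 0 \<and> as m \<in> Evec d \<and> bs m \<in> Evec d \<and>
        bform d (as m) (as m) = 1 \<and> bform d (bs m) (bs m) = 1 \<and> bform d (as m) (bs m) = 0 \<and>
        as m 0 * bs m d - as m d * bs m 0 > 0 \<and> cs m \<in> Xd d \<and>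
        W m 1 = Eop d (\<tau>s m) (cvec (as m)) (cvec (bs m)) (cvec (cs m))) sequentially"
    using section_seq[OF aE bE aa bb ab del H1(3) H1(1) lim1] by blast
  define z' where "z' = (\<lambda>j. Eop d (-(\<tau> 1)) (cvec a) (cvec b) (z (Suc j)))"
  have z'Z: "z' \<in> Zp d n"
    unfolding Zp_def
  proof (intro CollectI exI ballI)
    fix j assume j: "j \<in> {1..n}"
    then have "Suc j \<in> {1..Suc n}" by simp
    then have Hj: "Im (\<tau> (Suc j)) > 0" "M (Suc j) \<in> C1 d" "c (Suc j) \<in> Xd d"
      "z (Suc j) = expchain \<tau> M (Suc j) (cvec (c (Suc j)))" using H by auto
    have "z' j = expchain (\<lambda>k. \<tau> (Suc k)) (\<lambda>k. M (Suc k)) j (cvec (c (Suc j)))"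
      unfolding z'_def Hj(4) expchain_shift E1 by (rule Eop_inv[OF AA])
    then show "Im (\<tau> (Suc j)) > 0 \<and> M (Suc j) \<in> C1 d \<and> c (Suc j) \<in> Xd d \<and>
        z' j = expchain (\<lambda>k. \<tau> (Suc k)) (\<lambda>k. M (Suc k)) j (cvec (c (Suc j)))"
      using Hj by simp
  qed
  define W' where "W' = (\<lambda>m j. Eop d (-(\<tau>s m)) (cvec (as m)) (cvec (bs m)) (W m (Suc j)))"
  have VW': "\<forall>j. VT (\<lambda>m. W' m j) (z' j)"
    unfolding W'_def z'_def using Suc.prems(2)
    by (intro allI VT_Eop tendsto_intros L\<tau> VT_cvec Va Vb) auto
  have IH: "eventually (\<lambda>m. Xc d n (W' m) \<longrightarrow> W' m \<in> Zp d n) sequentially"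
    by (rule Suc.IH[OF z'Z VW'])
  show ?case
    using evS IH
  proof eventually_elim
    case (elim m)
    show ?case
    proof
      assume XW: "Xc d (Suc n) (W m)"
      then have W1: "W m 1 \<in> Xdc d" unfolding Xc_def by auto
      with elim(1) have S: "Im (\<tau>s m) > 0" "as m \<in> Evec d" "bs m \<in> Evec d"
        "bform d (as m) (as m) = 1" "bform d (bs m) (bs m) = 1" "bform d (as m) (bs m) = 0"
        "as m 0 * bs m d - as m d * bs m 0 > 0" "cs m \<in> Xd d"
        "W m 1 = Eop d (\<tau>s m) (cvec (as m)) (cvec (bs m)) (cvec (cs m))" by auto
      have AAm: "bform d (cvec (as m)) (cvec (as m)) = 1" "bform d (cvec (bs m)) (cvec (bs m)) = 1"
        "bform d (cvec (as m)) (cvec (bs m)) = 0"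
        using S by (simp_all add: bform_cvec)
      have "Xc d n (W' m)" unfolding Xc_def
      proof
        fix j assume "j \<in> {1..n}"
        then have "W m (Suc j) \<in> Xdc d" using XW unfolding Xc_def by auto
        then show "W' m j \<in> Xdc d" unfolding W'_def Xdc_def
          using Eop_isom[OF AAm] Eop_Evec[OF cvec_Evec[OF S(2)] cvec_Evec[OF S(3)]] by auto
      qed
      with elim(2) have "W' m \<in> Zp d n" by simp
      then obtain \<tau>' M' c' where H': "\<forall>j\<in>{1..n}.
          Im (\<tau>' j) > 0 \<and> M' j \<in> C1 d \<and> c' j \<in> Xd d \<and> W' m j = expchain \<tau>' M' j (cvec (c' j))"
        unfolding Zp_def by blast
      define \<tau>'' where "\<tau>'' = (\<lambda>j. if j = 1 then \<tau>s m else \<tau>' (j - 1))"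
      define M'' where "M'' = (\<lambda>j. if j = 1 then ell d (as m) (bs m) else M' (j - 1))"
      define c'' where "c'' = (\<lambda>j. if j = 1 then cs m else c' (j - 1))"
      have E1m: "expop (\<lambda>y i. \<tau>'' 1 * M'' 1 y i) = Eop d (\<tau>s m) (cvec (as m)) (cvec (bs m))"
        unfolding \<tau>''_def M''_def by (rule ext) (simp add: expop_ell[OF S(4) S(5) S(6)])
      have C1m: "ell d (as m) (bs m) \<in> C1 d" unfolding C1_def using S by blast
      show "W m \<in> Zp d (Suc n)"
        unfolding Zp_def
      proof (intro CollectI exI[of _ \<tau>''] exI[of _ M''] exI[of _ c''] ballI)
        fix j assume j: "j \<in> {1..Suc n}"
        show "Im (\<tau>'' j) > 0 \<and> M'' j \<in> C1 d \<and> c'' j \<in> Xd d \<and> W m j = expchain \<tau>'' M'' j (cvec (c'' j))"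
        proof (cases "j = 1")
          case True
          have "expchain \<tau>'' M'' 1 (cvec (c'' 1)) = expop (\<lambda>y i. \<tau>'' 1 * M'' 1 y i) (cvec (c'' 1))" by simp
          then show ?thesis using True S C1m E1m by (simp add: \<tau>''_def M''_def c''_def)
        next
          case False
          then obtain k where k: "j = Suc k" "k \<in> {1..n}" using j by (cases j) auto
          have Hk: "Im (\<tau>' k) > 0" "M' k \<in> C1 d" "c' k \<in> Xd d" "W' m k = expchain \<tau>' M' k (cvec (c' k))"
            using H' k(2) by auto
          have "expchain \<tau>'' M'' (Suc k) (cvec (c' k)) = Eop d (\<tau>s m) (cvec (as m)) (cvec (bs m))
                   (expchain (\<lambda>k. \<tau>'' (Suc k)) (\<lambda>k. M'' (Suc k)) k (cvec (c' k)))"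
            unfolding expchain_shift E1m ..
          also have "expchain (\<lambda>k. \<tau>'' (Suc k)) (\<lambda>k. M'' (Suc k)) k (cvec (c' k)) = expchain \<tau>' M' k (cvec (c' k))"
            by (rule expchain_cong) (auto simp: \<tau>''_def M''_def)
          also have "\<dots> = W' m k" using Hk(4) by simp
          also have "Eop d (\<tau>s m) (cvec (as m)) (cvec (bs m)) (W' m k) = W m (Suc k)"
            unfolding W'_def using Eop_inv[OF AAm, of "- \<tau>s m"] by simp
          finally show ?thesis using Hk k by (simp add: \<tau>''_def M''_def c''_def)
        qed
      qed
    qed
  qed
qed



theorem lemma8:
  fixes d n :: nat
  assumes "d \<ge> 2" and "n \<ge> 1"
  shows "openin (top_of_set (Xdc_pow d n)) (Zplus d n)"
proof -
  have ZZ: "Zplus d n = Xdc_pow d n \<inter> Zp d n" unfolding Zplus_def Zp_def by blast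
  show ?thesis
    unfolding openin_subopen[of _ "Zplus d n"]
  proof
    fix z assume zZ: "z \<in> Zplus d n"
    then have zX: "z \<in> Xdc_pow d n" and zP: "z \<in> Zp d n" unfolding ZZ by auto
    have "eventually (\<lambda>w. Xc d n w \<longrightarrow> w \<in> Zp d n) (nhds z)"
      unfolding eventually_nhds_iff_sequentially
    proof (intro allI impI)
      fix f :: "nat \<Rightarrow> nat \<Rightarrow> nat \<Rightarrow> complex" assume lim: "f \<longlonglongrightarrow> z"
      have "\<forall>j. VT (\<lambda>m. f m j) (z j)"
        unfolding VT_def
      proof (intro allI)
        fix j i
        have c1: "isCont (\<lambda>g::nat \<Rightarrow> nat \<Rightarrow> complex. g j) z"
          by (metis continuous_on_product_coordinates continuous_on_eq_continuous_at open_UNIV UNIV_I)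
        have c2: "isCont (\<lambda>g::nat \<Rightarrow> complex. g i) (z j)"
          by (metis continuous_on_product_coordinates continuous_on_eq_continuous_at open_UNIV UNIV_I)
        have "(\<lambda>m. f m j) \<longlonglongrightarrow> z j" using isCont_tendsto_compose[OF c1 lim] .
        then show "(\<lambda>m. f m j i) \<longlonglongrightarrow> z j i" using isCont_tendsto_compose[OF c2] by blast
      qed
      then show "\<forall>\<^sub>F m in sequentially. Xc d n (f m) \<longrightarrow> f m \<in> Zp d n" by (rule core[OF zP])
    qed
    then obtain U where U: "open U" "z \<in> U" "\<forall>w\<in>U. Xc d n w \<longrightarrow> w \<in> Zp d n"
      unfolding eventually_nhds by blast
    show "\<exists>T. openin (top_of_set (Xdc_pow d n)) T \<and> z \<in> T \<and> T \<subseteq> Zplus d n"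
    proof (intro exI conjI)
      show "openin (top_of_set (Xdc_pow d n)) (Xdc_pow d n \<inter> U)" using U(1) by (rule openin_open_Int)
      show "z \<in> Xdc_pow d n \<inter> U" using zX U(2) by simp
      show "Xdc_pow d n \<inter> U \<subseteq> Zplus d n"
        using U(3) unfolding ZZ Xc_def Xdc_pow_def by blast
    qed
  qed
qed


end
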